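(* (McDiarmid's inequality under Poisson sampling.) Let $k\ge1$ and $n\ge 1$ be integers, $\vec p$ a probability distribution on $[k]$, and $\hat f:[k]^*\to\mathbb{R}$ an estimator whose sensitivity satisfies $1/n\le S(\hat f)<\infty$. Let $N\sim\mathrm{Poi}(n)$ and, conditionally on $N$, let $X^N$ be $N$ i.i.d. samples from $\vec p$. Then for every $\varepsilon\in(0,1)$, \[ \Pr\Big(\big|\hat f(X^N)-\mathbb{E}[\hat f(X^N)]\big|>\varepsilon\Big)\le 4\exp\Big(-\frac{\varepsilon^2}{2n\,(4S(\hat f))^2}\Big). \]
   Context: $[k]:=\{1,\dots,k\}$ and $[k]^*$ is the set of finite sequences over $[k]$ (including the empty sequence). The sensitivity of $\hat f$ is \[ S(\hat f):=\sup\{|\hat f(x)-\hat f(y)| : x,y\in[k]^*,\ y \text{ is obtained from } x \text{ by changing, inserting, or deleting a single symbol}\}. \] *)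

theory Defs
  imports "HOL-Probability.Probability"
begin

text \<open>The alphabet [k] = {1..k}; finite sequences over [k] are lists with all entries in {1..k}.\<close>

definition one_edit :: "nat list \<Rightarrow> nat list \<Rightarrow> bool" where
  "one_edit x y \<longleftrightarrow>
     (\<exists>u v a b. x = u @ a # v \<and> y = u @ b # v) \<or>
     (\<exists>u v a. x = u @ v \<and> y = u @ a # v) \<or>
     (\<exists>u v a. x = u @ a # v \<and> y = u @ v)"

definition sens_set :: "nat \<Rightarrow> (nat list \<Rightarrow> real) \<Rightarrow> real set" where
  "sens_set k f = {\<bar>f x - f y\<bar> | x y.
      set x \<subseteq> {1..k} \<and> set y \<subseteq> {1..k} \<and> one_edit x y}"

text \<open>Sensitivity S(f) (a real number; meaningful when the set is bounded above, i.e. S(f) finite).\<close>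
definition sensitivity :: "nat \<Rightarrow> (nat list \<Rightarrow> real) \<Rightarrow> real" where
  "sensitivity k f = Sup (sens_set k f)"

definition poisson_sample :: "nat \<Rightarrow> nat pmf \<Rightarrow> nat list pmf" where
  "poisson_sample n p = bind_pmf (poisson_pmf (real n)) (\<lambda>N. replicate_pmf N p)"

end

theory Submission
  imports Defs
begin


lemma exp_le_quad:
  fixes y :: real assumes "\<bar>y\<bar> \<le> 1" shows "exp y \<le> 1 + y + y\<^sup>2"
proof (cases "y \<ge> 0")
  case True then show ?thesis using exp_bound[of y] assms by auto
next
  case False
  define m where "m = - y"
  have m: "0 \<le> m" "m \<le> 1" using False assms by (auto simp: m_def)
  have "1 \<le> (1 - m + m\<^sup>2) * (1 + m)" using m by (simp add: algebra_simps power2_eq_square power3_eq_cube)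
  also have "\<dots> \<le> (1 - m + m\<^sup>2) * exp m"
    using m zero_le_power2[of m] by (intro mult_left_mono) auto
  finally have "exp (-m) \<le> 1 - m + m\<^sup>2" by (simp add: exp_minus field_simps)
  then show ?thesis by (simp add: m_def)
qed

lemma poisson_mgf:
  assumes r: "r > 0"
  shows "(\<integral>\<^sup>+N. ennreal (exp (c * real N)) \<partial>poisson_pmf r) = ennreal (exp (r * (exp c - 1)))"
proof -
  have summ: "summable (\<lambda>N. (r * exp c) ^ N / fact N)"
    using summable_exp_generic[of "r * exp c"] by (simp add: divide_inverse mult.commute)
  have "(\<integral>\<^sup>+N. ennreal (exp (c * real N)) \<partial>poisson_pmf r)
      = (\<integral>\<^sup>+N. ennreal (pmf (poisson_pmf r) N) * ennreal (exp (c * real N)) \<partial>count_space UNIV)"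
    by (rule nn_integral_measure_pmf)
  also have "\<dots> = (\<integral>\<^sup>+N. ennreal ((r * exp c) ^ N / fact N * exp (-r)) \<partial>count_space UNIV)"
    using r by (intro nn_integral_cong)
       (simp add: ennreal_mult'[symmetric] power_mult_distrib exp_of_nat_mult[symmetric] mult.commute)
  also have "\<dots> = ennreal (\<Sum>N. (r * exp c) ^ N / fact N * exp (-r))"
    using r by (subst nn_integral_count_space_nat) (rule suminf_ennreal2[OF _ summable_mult2[OF summ]], simp)
  also have "(\<Sum>N. (r * exp c) ^ N / fact N * exp (-r)) = (\<Sum>N. (r * exp c) ^ N / fact N) * exp (-r)"
    using summ by (rule suminf_mult2[symmetric])
  also have "(\<Sum>N. (r * exp c) ^ N / fact N) = exp (r * exp c)"
    using exp_converges[of "r * exp c"] by (simp add: sums_iff divide_inverse mult.commute)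
  also have "exp (r * exp c) * exp (-r) = exp (r * (exp c - 1))"
    by (simp add: mult_exp_exp algebra_simps)
  finally show ?thesis .
qed




lemma cosh2: "2 \<le> exp x + exp (-x::real)"
proof -
  have "exp x + exp (-x) - 2 = (exp (x/2) - exp (-x/2))\<^sup>2"
    by (simp add: power2_eq_square algebra_simps mult_exp_exp)
  then show ?thesis by (metis diff_ge_0_iff_ge zero_le_power2)
qed

lemma sinh_ineq: fixes t :: real assumes "0 \<le> t" shows "2*t \<le> exp t - exp (-t)"
proof -
  have "(\<lambda>x. exp x - exp (-x) - 2*x) 0 \<le> (\<lambda>x. exp x - exp (-x) - 2*x) t"
  proof (rule DERIV_nonneg_imp_increasing_open[OF assms])
    fix x :: real
    show "\<exists>y. ((\<lambda>x. exp x - exp (-x) - 2*x) has_real_derivative y) (at x) \<and> 0 \<le> y"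
      by (intro exI conjI) (auto intro!: derivative_eq_intros simp: cosh2[of x])
  qed (intro continuous_intros)
  then show ?thesis by simp
qed

lemma cosh_ineq: "2 + y\<^sup>2 \<le> exp y + exp (-y::real)"
proof -
  have *: "2 + t\<^sup>2 \<le> exp t + exp (-t)" if t: "0 \<le> t" for t :: real
  proof -
    have "(\<lambda>x. exp x + exp (-x) - 2 - x\<^sup>2) 0 \<le> (\<lambda>x. exp x + exp (-x) - 2 - x\<^sup>2) t"
    proof (rule DERIV_nonneg_imp_increasing_open[OF t])
      fix x :: real assume "0 < x"
      then show "\<exists>y. ((\<lambda>x. exp x + exp (-x) - 2 - x\<^sup>2) has_real_derivative y) (at x) \<and> 0 \<le> y"
        using sinh_ineq[of x] by (intro exI conjI) (auto intro!: derivative_eq_intros)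
    qed (intro continuous_intros)
    then show ?thesis by simp
  qed
  show ?thesis
  proof (cases "0 \<le> y")
    case True then show ?thesis using * by blast
  next
    case False then show ?thesis using *[of "-y"] by (simp add: add.commute)
  qed
qed




lemma rep_Suc: "replicate_pmf (Suc m) p = bind_pmf p (\<lambda>x. map_pmf (Cons x) (replicate_pmf m p))"
  by (simp add: map_pmf_def)

lemma fin_rep: "finite (set_pmf p) \<Longrightarrow> finite (set_pmf (replicate_pmf m p))"
  unfolding set_replicate_pmf
  using finite_lists_length_eq[of "set_pmf p" m] by (simp add: lists_eq_set)

lemma exp_rep_Suc:
  fixes h :: "'a list \<Rightarrow> real"
  assumes fin: "finite (set_pmf p)"
  shows "measure_pmf.expectation (replicate_pmf (Suc m) p) h =
         measure_pmf.expectation p (\<lambda>x. measure_pmf.expectation (replicate_pmf m p) (\<lambda>xs. h (x#xs)))"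
proof -
  have "measure_pmf.expectation (replicate_pmf (Suc m) p) h =
        (\<Sum>a\<in>set_pmf p. pmf p a *\<^sub>R measure_pmf.expectation (map_pmf (Cons a) (replicate_pmf m p)) h)"
    unfolding rep_Suc using fin fin_rep[OF fin, of m]
    by (intro pmf_expectation_bind) auto
  also have "\<dots> = (\<Sum>a\<in>set_pmf p. measure_pmf.expectation (replicate_pmf m p) (\<lambda>xs. h (a#xs)) * pmf p a)"
    by (simp add: mult.commute)
  also have "\<dots> = measure_pmf.expectation p (\<lambda>x. measure_pmf.expectation (replicate_pmf m p) (\<lambda>xs. h (x#xs)))"
    using fin by (intro integral_measure_pmf_real[symmetric]) auto
  finally show ?thesis .
qed

lemma mcdiarmid_mgf:
  fixes p :: "'a pmf" and h :: "'a list \<Rightarrow> real"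
  assumes fin: "finite (set_pmf p)" and l: "l > 0"
  and bd: "\<And>u v a b. set u \<subseteq> set_pmf p \<Longrightarrow> set v \<subseteq> set_pmf p \<Longrightarrow> a \<in> set_pmf p \<Longrightarrow> b \<in> set_pmf p
             \<Longrightarrow> \<bar>h (u@a#v) - h (u@b#v)\<bar> \<le> c"
  shows "(\<integral>\<^sup>+xs. ennreal (exp (l * (h xs - measure_pmf.expectation (replicate_pmf m p) h))) \<partial>replicate_pmf m p)
           \<le> ennreal (exp (l\<^sup>2 * real m * c\<^sup>2 / 8))"
  using bd
proof (induction m arbitrary: h)
  case 0
  then show ?case by simp
next
  case (Suc m)
  note bdS = Suc.prems
  define R where "R = replicate_pmf m p"
  define h1 where "h1 x = measure_pmf.expectation R (\<lambda>xs. h (x#xs))" for x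
  define E where "E = measure_pmf.expectation (replicate_pmf (Suc m) p) h"
  have E: "E = measure_pmf.expectation p h1"
    unfolding E_def h1_def R_def by (rule exp_rep_Suc[OF fin])
  have finR: "finite (set_pmf R)" unfolding R_def by (rule fin_rep[OF fin])
  have setR: "set xs \<subseteq> set_pmf p" if "xs \<in> set_pmf R" for xs
    using that unfolding R_def set_replicate_pmf by auto
  define A where "A = exp (l\<^sup>2 * real m * c\<^sup>2 / 8)"
  have inner: "(\<integral>\<^sup>+xs. ennreal (exp (l * (h (x#xs) - E))) \<partial>R) \<le> ennreal A * ennreal (exp (l * (h1 x - E)))"
    if x: "x \<in> set_pmf p" for x
  proof -
    have "(\<integral>\<^sup>+xs. ennreal (exp (l * (h (x#xs) - E))) \<partial>R)
        = (\<integral>\<^sup>+xs. ennreal (exp (l * (h (x#xs) - h1 x))) * ennreal (exp (l * (h1 x - E))) \<partial>R)"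
      by (intro nn_integral_cong) (simp add: ennreal_mult'[symmetric] mult_exp_exp algebra_simps)
    also have "\<dots> = (\<integral>\<^sup>+xs. ennreal (exp (l * (h (x#xs) - h1 x))) \<partial>R) * ennreal (exp (l * (h1 x - E)))"
      by (rule nn_integral_multc) simp
    also have "\<dots> \<le> ennreal A * ennreal (exp (l * (h1 x - E)))"
    proof (intro mult_right_mono)
      have "(\<integral>\<^sup>+xs. ennreal (exp (l * (h (x#xs) - measure_pmf.expectation (replicate_pmf m p) (\<lambda>xs. h (x#xs))))) \<partial>replicate_pmf m p) \<le> ennreal A"
        unfolding A_def
      proof (rule Suc.IH)
        fix u v a b assume "set u \<subseteq> set_pmf p" "set v \<subseteq> set_pmf p" "a \<in> set_pmf p" "b \<in> set_pmf p"
        then show "\<bar>h (x # u @ a # v) - h (x # u @ b # v)\<bar> \<le> c"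
          using bdS[of "x#u" v a b] x by auto
      qed
      then show "(\<integral>\<^sup>+xs. ennreal (exp (l * (h (x#xs) - h1 x))) \<partial>R) \<le> ennreal A"
        unfolding h1_def R_def .
    qed simp
    finally show ?thesis .
  qed
  have ne: "set_pmf p \<noteq> {}" by (rule set_pmf_not_empty)
  define a where "a = Min (h1 ` set_pmf p)"
  have "a \<in> h1 ` set_pmf p" unfolding a_def using fin ne by (intro Min_in) auto
  then obtain x0 where x0: "x0 \<in> set_pmf p" "a = h1 x0" by blast
  have diff: "h1 y - h1 x0 \<le> c" if y: "y \<in> set_pmf p" for y
  proof -
    have "h1 y - h1 x0 = measure_pmf.expectation R (\<lambda>xs. h (y#xs) - h (x0#xs))"
      unfolding h1_def using finR
      by (simp add: Bochner_Integration.integral_diff integrable_measure_pmf_finite)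
    also have "\<dots> \<le> c"
    proof (rule measure_pmf.integral_le_const)
      show "integrable (measure_pmf R) (\<lambda>xs. h (y#xs) - h (x0#xs))"
        using finR by (rule integrable_measure_pmf_finite)
      show "AE xs in measure_pmf R. h (y#xs) - h (x0#xs) \<le> c"
        unfolding AE_measure_pmf_iff
        using bdS[of "[]" _ y x0] y x0 setR by fastforce
    qed
    finally show ?thesis .
  qed
  have inI: "h1 y \<in> {a..a+c}" if "y \<in> set_pmf p" for y
  proof -
    have "a \<le> h1 y" unfolding a_def using fin that by (intro Min_le) auto
    then show ?thesis using diff[OF that] x0 by auto
  qed
  interpret H: interval_bounded_random_variable "measure_pmf p" h1 a "a + c"
    by unfold_locales (use inI in \<open>auto simp: AE_measure_pmf_iff\<close>)
  have hoef: "(\<integral>\<^sup>+x. ennreal (exp (l * (h1 x - E))) \<partial>p) \<le> ennreal (exp (l\<^sup>2 * c\<^sup>2 / 8))"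
    using H.Hoeffdings_lemma_nn_integral[OF l] unfolding E by simp
  have "(\<integral>\<^sup>+xs. ennreal (exp (l * (h xs - E))) \<partial>replicate_pmf (Suc m) p)
      = (\<integral>\<^sup>+x. (\<integral>\<^sup>+xs. ennreal (exp (l * (h (x#xs) - E))) \<partial>R) \<partial>p)"
    unfolding rep_Suc R_def by simp
  also have "\<dots> \<le> (\<integral>\<^sup>+x. ennreal A * ennreal (exp (l * (h1 x - E))) \<partial>p)"
    by (intro nn_integral_mono_AE) (use inner in \<open>auto simp: AE_measure_pmf_iff\<close>)
  also have "\<dots> = ennreal A * (\<integral>\<^sup>+x. ennreal (exp (l * (h1 x - E))) \<partial>p)"
    by (rule nn_integral_cmult) simp
  also have "\<dots> \<le> ennreal A * ennreal (exp (l\<^sup>2 * c\<^sup>2 / 8))"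
    by (intro mult_left_mono hoef) simp
  also have "\<dots> = ennreal (exp (l\<^sup>2 * real (Suc m) * c\<^sup>2 / 8))"
    unfolding A_def by (simp add: ennreal_mult'[symmetric] mult_exp_exp algebra_simps add_divide_distrib)
  finally show ?case unfolding E_def .
qed




lemma abs_E_le:
  fixes M :: "'a pmf" and F :: "'a \<Rightarrow> real"
  assumes "integrable M F" "\<And>x. x \<in> set_pmf M \<Longrightarrow> \<bar>F x\<bar> \<le> c"
  shows "\<bar>measure_pmf.expectation M F\<bar> \<le> c"
proof -
  have "measure_pmf.expectation M F \<le> c"
    using assms by (intro measure_pmf.integral_le_const) (auto simp: AE_measure_pmf_iff abs_le_iff)
  moreover have "-c \<le> measure_pmf.expectation M F"
  proof (intro measure_pmf.integral_ge_const assms(1))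
    show "AE x in measure_pmf M. - c \<le> F x" unfolding AE_measure_pmf_iff
    proof
      fix x assume "x \<in> set_pmf M" then have "\<bar>F x\<bar> \<le> c" by (rule assms(2))
      then show "-c \<le> F x" by linarith
    qed
  qed
  ultimately show ?thesis by auto
qed


lemma chernoff_pmf:
  fixes M :: "'a pmf" and F :: "'a \<Rightarrow> real"
  assumes l: "l > 0"
  shows "emeasure (measure_pmf M) {x. t < F x} \<le> ennreal (exp (-l*t)) * (\<integral>\<^sup>+x. ennreal (exp (l * F x)) \<partial>M)"
proof -
  have "emeasure (measure_pmf M) {x. t < F x} = (\<integral>\<^sup>+x. indicator {x. t < F x} x \<partial>M)"
    by (rule nn_integral_indicator[symmetric]) simp
  also have "\<dots> \<le> (\<integral>\<^sup>+x. ennreal (exp (-l*t)) * ennreal (exp (l * F x)) \<partial>M)"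
  proof (intro nn_integral_mono)
    fix x
    show "indicator {x. t < F x} x \<le> ennreal (exp (-l*t)) * ennreal (exp (l * F x))"
    proof (cases "t < F x")
      case True
      have "1 \<le> exp (-l*t) * exp (l * F x)"
        using True l by (simp add: mult_exp_exp algebra_simps)
      then show ?thesis using True by (simp add: ennreal_mult'[symmetric])
    qed simp
  qed
  also have "\<dots> = ennreal (exp (-l*t)) * (\<integral>\<^sup>+x. ennreal (exp (l * F x)) \<partial>M)"
    by (rule nn_integral_cmult) simp
  finally show ?thesis .
qed

locale setting =
  fixes k :: nat and p :: "nat pmf" and f :: "nat list \<Rightarrow> real"
  assumes supp: "set_pmf p \<subseteq> {1..k}"
    and bdd: "bdd_above (sens_set k f)" and k1: "k \<ge> 1"
begin

abbreviation "S \<equiv> sensitivity k f"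
definition g :: "nat \<Rightarrow> real" where "g N = measure_pmf.expectation (replicate_pmf N p) f"

lemma finp: "finite (set_pmf p)"
  using supp finite_subset by blast

lemma sens_le: "set x \<subseteq> {1..k} \<Longrightarrow> set y \<subseteq> {1..k} \<Longrightarrow> one_edit x y \<Longrightarrow> \<bar>f x - f y\<bar> \<le> S"
  unfolding sensitivity_def by (rule cSup_upper[OF _ bdd]) (auto simp: sens_set_def)

lemma S_nonneg: "0 \<le> S"
proof -
  have "one_edit [1] [1]" unfolding one_edit_def by (rule disjI1) (intro exI[of _ "[]"]; auto)
  hence "\<bar>f [1] - f [1]\<bar> \<le> S" using sens_le[of "[1]" "[1]"] k1 by auto
  thus ?thesis by simp
qed

lemma subst_bd: "set u \<subseteq> set_pmf p \<Longrightarrow> set v \<subseteq> set_pmf p \<Longrightarrow> a \<in> set_pmf p \<Longrightarrow> b \<in> set_pmf p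
    \<Longrightarrow> \<bar>f (u@a#v) - f (u@b#v)\<bar> \<le> S"
proof (intro sens_le)
  show "one_edit (u@a#v) (u@b#v)" unfolding one_edit_def by (rule disjI1) blast
qed (use supp in auto)

lemma subst_bd_neg: "set u \<subseteq> set_pmf p \<Longrightarrow> set v \<subseteq> set_pmf p \<Longrightarrow> a \<in> set_pmf p \<Longrightarrow> b \<in> set_pmf p
    \<Longrightarrow> \<bar>(\<lambda>xs. - f xs) (u@a#v) - (\<lambda>xs. - f xs) (u@b#v)\<bar> \<le> S"
  using subst_bd[of u v a b] by simp

lemma cons_bd: "set (a#xs) \<subseteq> {1..k} \<Longrightarrow> \<bar>f (a#xs) - f xs\<bar> \<le> S"
proof (rule sens_le)
  show "one_edit (a#xs) xs" unfolding one_edit_def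
    by (rule disjI2, rule disjI2, rule exI[of _ "[]"]) auto
qed auto

lemma len_bd: "set xs \<subseteq> {1..k} \<Longrightarrow> \<bar>f xs - f []\<bar> \<le> S * length xs"
proof (induction xs)
  case (Cons a xs)
  have "\<bar>f (a#xs) - f xs\<bar> \<le> S" using cons_bd Cons.prems .
  then show ?case using Cons by (auto simp: algebra_simps)
qed simp

lemma setR: "xs \<in> set_pmf (replicate_pmf N p) \<Longrightarrow> set xs \<subseteq> {1..k} \<and> length xs = N"
  using supp unfolding set_replicate_pmf by auto

lemma finR: "finite (set_pmf (replicate_pmf N p))"
  using finp by (simp add: set_replicate_pmf lists_eq_set finite_lists_length_eq)

lemma intR: fixes F :: "nat list \<Rightarrow> real" shows "integrable (measure_pmf (replicate_pmf N p)) F"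
  by (rule integrable_measure_pmf_finite[OF finR])

lemma g_Suc: "\<bar>g (Suc N) - g N\<bar> \<le> S"
proof -
  have "g (Suc N) - g N = measure_pmf.expectation p
          (\<lambda>x. measure_pmf.expectation (replicate_pmf N p) (\<lambda>xs. f (x#xs) - f xs))"
    unfolding g_def exp_rep_Suc[OF finp]
    by (simp add: Bochner_Integration.integral_diff intR integrable_measure_pmf_finite[OF finp])
  also have "\<bar>\<dots>\<bar> \<le> S"
  proof (intro abs_E_le integrable_measure_pmf_finite[OF finp] abs_E_le[OF intR])
    fix x xs assume x: "x \<in> set_pmf p" and xs: "xs \<in> set_pmf (replicate_pmf N p)"
    have "set (x#xs) \<subseteq> {1..k}" using x supp setR[OF xs] by auto
    then show "\<bar>f (x#xs) - f xs\<bar> \<le> S" by (rule cons_bd)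
  qed (rule intR)
  finally show ?thesis .
qed

lemma g_shift: "\<bar>g (M + d) - g M\<bar> \<le> S * d"
proof (induction d)
  case (Suc d)
  have "\<bar>g (Suc (M + d)) - g (M + d)\<bar> \<le> S" by (rule g_Suc)
  then show ?case using Suc by (simp add: algebra_simps)
qed simp

lemma g_lip: "\<bar>g N - g M\<bar> \<le> S * \<bar>real N - real M\<bar>"
proof (cases "M \<le> N")
  case True
  then obtain d where "N = M + d" using le_Suc_ex by blast
  then show ?thesis using g_shift[of M d] by simp
next
  case False
  then obtain d where "M = N + d" using le_Suc_ex[of N M] by auto
  then show ?thesis using g_shift[of N d] by (simp add: abs_minus_commute)
qed

lemma g_bd: "\<bar>g N - f []\<bar> \<le> S * N"
proof -
  have "g N - f [] = measure_pmf.expectation (replicate_pmf N p) (\<lambda>xs. f xs - f [])"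
    unfolding g_def by (simp add: Bochner_Integration.integral_diff intR)
  also have "\<bar>\<dots>\<bar> \<le> S * N"
    by (intro abs_E_le intR) (auto dest!: setR intro!: len_bd)
  finally show ?thesis .
qed

end



lemma poisson_mgf_int:
  assumes r: "r > 0"
  shows "integrable (measure_pmf (poisson_pmf r)) (\<lambda>N. exp (c * real N))"
    and "measure_pmf.expectation (poisson_pmf r) (\<lambda>N. exp (c * real N)) = exp (r * (exp c - 1))"
proof -
  show "integrable (measure_pmf (poisson_pmf r)) (\<lambda>N. exp (c * real N))"
    by (rule integrableI_nn_integral_finite[OF _ _ poisson_mgf[OF r]]) auto
  show "measure_pmf.expectation (poisson_pmf r) (\<lambda>N. exp (c * real N)) = exp (r * (exp c - 1))"
    by (subst integral_eq_nn_integral) (auto simp: poisson_mgf[OF r])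
qed

lemma poisson_int_N:
  assumes r: "r > 0"
  shows "integrable (measure_pmf (poisson_pmf r)) (\<lambda>N. real N)"
proof (rule Bochner_Integration.integrable_bound[OF poisson_mgf_int(1)[OF r, of 1]])
  show "AE x in measure_pmf (poisson_pmf r). norm (real x) \<le> norm (exp (1 * real x))"
    using exp_ge_add_one_self[of "real _"] by (auto intro!: always_eventually) (smt (verit) exp_ge_add_one_self)
qed simp

lemma mgf_centered_le:
  assumes n: "n \<ge> (1::nat)" and mu: "\<bar>c\<bar> \<le> 1"
  shows "exp (- c * real n) * exp (real n * (exp c - 1)) \<le> exp (real n * c\<^sup>2)"
proof -
  have "exp c - 1 - c \<le> c\<^sup>2" using exp_le_quad[OF mu] by simp
  then have "real n * (exp c - 1 - c) \<le> real n * c\<^sup>2" by (intro mult_left_mono) auto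
  then show ?thesis by (simp add: mult_exp_exp algebra_simps)
qed

lemma E_absdev:
  assumes n: "n \<ge> (1::nat)"
  shows "measure_pmf.expectation (poisson_pmf (real n)) (\<lambda>N. \<bar>real N - real n\<bar>) \<le> 7/4 * sqrt (real n)"
proof -
  define a where "a = sqrt (real n)"
  define \<mu> where "\<mu> = 1 / (2 * a)"
  have a: "a > 0" "a\<^sup>2 = real n" "a \<ge> 1" using n by (auto simp: a_def)
  have mu: "\<mu> > 0" "\<mu> \<le> 1" "real n * \<mu>\<^sup>2 = 1/4" using a n
    by (auto simp: \<mu>_def power2_eq_square field_simps)
  define P where "P = poisson_pmf (real n)"
  have rn: "real n > 0" using n by simp
  define u1 where "u1 N = exp (\<mu> * real N)" for N :: nat
  define u2 where "u2 N = exp ((-\<mu>) * real N)" for N :: nat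
  define C1 where "C1 = exp (-\<mu>*real n)"
  define C2 where "C2 = exp (-(-\<mu>)*real n)"
  define B where "B N = 2*a*(C1 * u1 N + C2 * u2 N - 2) + a/2" for N
  have pw: "\<bar>real N - real n\<bar> \<le> B N" for N
  proof -
    define x where "x = real N - real n"
    have "\<bar>x\<bar> \<le> x\<^sup>2 / (2*a) + a/2"
    proof -
      have "0 \<le> (\<bar>x\<bar> - a)\<^sup>2" by simp
      then have "2 * a * \<bar>x\<bar> \<le> x\<^sup>2 + a\<^sup>2" by (simp add: power2_eq_square algebra_simps)
      then show ?thesis using a by (simp add: field_simps power2_eq_square)
    qed
    also have "x\<^sup>2 / (2*a) \<le> 2*a*(exp (\<mu>*x) + exp (-(\<mu>*x)) - 2)"
    proof -
      have "2 + (\<mu>*x)\<^sup>2 \<le> exp (\<mu>*x) + exp (-(\<mu>*x))" by (rule cosh_ineq)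
      moreover have "x\<^sup>2 / (2*a) = 2*a*(\<mu>*x)\<^sup>2" using a
        by (simp add: \<mu>_def power2_eq_square field_simps)
      ultimately show ?thesis using a by (simp add: mult_left_mono)
    qed
    also have "exp (\<mu>*x) = C1 * u1 N"
      by (simp add: C1_def u1_def x_def mult_exp_exp algebra_simps)
    also have "exp (-(\<mu>*x)) = C2 * u2 N"
      by (simp add: C2_def u2_def x_def mult_exp_exp algebra_simps)
    finally show ?thesis unfolding B_def x_def by simp
  qed
  have i1: "integrable P u1" "integrable P u2"
    unfolding P_def u1_def u2_def by (rule poisson_mgf_int(1)[OF rn])+
  have e1: "measure_pmf.expectation P u1 = exp (real n * (exp \<mu> - 1))"
     "measure_pmf.expectation P u2 = exp (real n * (exp (-\<mu>) - 1))"
    unfolding P_def u1_def u2_def by (rule poisson_mgf_int(2)[OF rn])+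
  have intB: "integrable P B" unfolding B_def using i1 by simp
  have "measure_pmf.expectation P (\<lambda>N. \<bar>real N - real n\<bar>) \<le> measure_pmf.expectation P B"
  proof (rule integral_mono[OF _ intB])
    show "integrable P (\<lambda>N. \<bar>real N - real n\<bar>)"
      using poisson_int_N[OF rn] unfolding P_def by simp
  qed (use pw in auto)
  also have "measure_pmf.expectation P B = 2*a*(C1 * exp (real n * (exp \<mu> - 1)) +
       C2 * exp (real n * (exp (-\<mu>) - 1)) - 2) + a/2"
    unfolding B_def using i1 by (simp add: e1)
  also have "\<dots> = 2*a*(exp (-\<mu>*real n) * exp (real n * (exp \<mu> - 1)) +
       exp (-(-\<mu>)*real n) * exp (real n * (exp (-\<mu>) - 1)) - 2) + a/2"
    unfolding C1_def C2_def ..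
  also have "\<dots> \<le> 2*a*(exp (1/4) + exp (1/4) - 2) + a/2"
  proof -
    have "exp (-\<mu>*real n) * exp (real n * (exp \<mu> - 1)) \<le> exp (real n * \<mu>\<^sup>2)"
      using mu by (intro mgf_centered_le n) auto
    moreover have "exp (-(-\<mu>)*real n) * exp (real n * (exp (-\<mu>) - 1)) \<le> exp (real n * (-\<mu>)\<^sup>2)"
      using mu by (intro mgf_centered_le n) auto
    ultimately show ?thesis using a mu by (simp add: mult_left_mono)
  qed
  also have "\<dots> \<le> 7/4 * a"
  proof -
    have "exp (1/4::real) \<le> 1 + 1/4 + (1/4)\<^sup>2" by (rule exp_bound) auto
    then show ?thesis using a by (simp add: power2_eq_square)
  qed
  finally show ?thesis unfolding a_def P_def .
qed

context setting
begin

definition Q :: "nat \<Rightarrow> nat list pmf" where "Q n = poisson_sample n p"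

lemma setQ: "xs \<in> set_pmf (Q n) \<Longrightarrow> set xs \<subseteq> {1..k}"
  using setR unfolding Q_def poisson_sample_def set_bind_pmf by blast

lemma nnQ:
  fixes F :: "nat \<Rightarrow> ennreal"
  shows "(\<integral>\<^sup>+xs. F (length xs) \<partial>Q n) = (\<integral>\<^sup>+N. F N \<partial>poisson_pmf (real n))"
proof -
  have "(\<integral>\<^sup>+xs. F (length xs) \<partial>Q n) = (\<integral>\<^sup>+N. (\<integral>\<^sup>+xs. F (length xs) \<partial>replicate_pmf N p) \<partial>poisson_pmf (real n))"
    unfolding Q_def poisson_sample_def by simp
  also have "\<dots> = (\<integral>\<^sup>+N. F N \<partial>poisson_pmf (real n))"
  proof (intro nn_integral_cong)
    fix N
    have "(\<integral>\<^sup>+xs. F (length xs) \<partial>replicate_pmf N p) = (\<integral>\<^sup>+xs. F N \<partial>replicate_pmf N p)"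
      by (intro nn_integral_cong_AE) (auto simp: AE_measure_pmf_iff dest: setR)
    also have "\<dots> = F N" by (simp add: measure_pmf.emeasure_space_1)
    finally show "(\<integral>\<^sup>+xs. F (length xs) \<partial>replicate_pmf N p) = F N" .
  qed
  finally show ?thesis .
qed

lemma intQ_len: assumes n: "n \<ge> 1"
  shows "integrable (Q n) (\<lambda>xs. real (length xs))"
proof -
  have "(\<integral>\<^sup>+xs. ennreal (norm (real (length xs))) \<partial>Q n) = (\<integral>\<^sup>+N. ennreal (real N) \<partial>poisson_pmf (real n))"
    using nnQ[where F="\<lambda>N. ennreal (real N)"] by simp
  also have "\<dots> < \<infinity>"
    using poisson_int_N[of "real n"] n by (simp add: integrable_iff_bounded)
  finally show ?thesis by (simp add: integrable_iff_bounded)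
qed

lemma intQ_f: assumes n: "n \<ge> 1"
  shows "integrable (Q n) f"
proof (rule Bochner_Integration.integrable_bound)
  show "integrable (Q n) (\<lambda>xs. \<bar>f []\<bar> + S * real (length xs))"
    using intQ_len[OF n] by simp
  show "AE x in measure_pmf (Q n). norm (f x) \<le> norm (\<bar>f []\<bar> + S * real (length x))"
    unfolding AE_measure_pmf_iff
  proof
    fix xs assume "xs \<in> set_pmf (Q n)"
    then have "\<bar>f xs - f []\<bar> \<le> S * real (length xs)" by (intro len_bd setQ)
    then show "norm (f xs) \<le> norm (\<bar>f []\<bar> + S * real (length xs))"
      using S_nonneg by auto
  qed
qed simp

lemma intP_g: assumes n: "n \<ge> 1"
  shows "integrable (poisson_pmf (real n)) g"
proof (rule Bochner_Integration.integrable_bound)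
  show "integrable (poisson_pmf (real n)) (\<lambda>N. \<bar>f []\<bar> + S * real N)"
    using poisson_int_N[of "real n"] n by simp
  show "AE x in measure_pmf (poisson_pmf (real n)). norm (g x) \<le> norm (\<bar>f []\<bar> + S * real x)"
    using g_bd S_nonneg by (auto intro!: always_eventually) (smt (verit, best) g_bd)
qed simp

lemma E_len: assumes n: "n \<ge> 1"
  shows "measure_pmf.expectation (Q n) (\<lambda>xs. real (length xs)) =
         measure_pmf.expectation (poisson_pmf (real n)) (\<lambda>N. real N)"
  using nnQ[where F="\<lambda>N. ennreal (real N)"]
  by (simp add: integral_eq_nn_integral)

lemma tower: assumes n: "n \<ge> 1"
  shows "measure_pmf.expectation (Q n) f = measure_pmf.expectation (poisson_pmf (real n)) g"
proof -
  define F where "F xs = f xs - f [] + S * real (length xs)" for xs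
  define G where "G N = g N - f [] + S * real N" for N
  have Fnn: "0 \<le> F xs" if "xs \<in> set_pmf (Q n)" for xs
    using len_bd[OF setQ[OF that]] unfolding F_def by linarith
  have Gnn: "0 \<le> G N" for N
    using g_bd[of N] unfolding G_def by linarith
  have inner: "(\<integral>\<^sup>+xs. ennreal (F xs) \<partial>replicate_pmf N p) = ennreal (G N)" for N
  proof -
    have Fnn': "0 \<le> F xs" if "xs \<in> set_pmf (replicate_pmf N p)" for xs
      using len_bd[of xs] setR[OF that] unfolding F_def by linarith
    have "(\<integral>\<^sup>+xs. ennreal (F xs) \<partial>replicate_pmf N p) = ennreal (measure_pmf.expectation (replicate_pmf N p) F)"
      by (intro nn_integral_eq_integral intR) (auto simp: AE_measure_pmf_iff Fnn')
    also have "measure_pmf.expectation (replicate_pmf N p) F =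
               measure_pmf.expectation (replicate_pmf N p) (\<lambda>xs. f xs - f [] + S * real N)"
      unfolding F_def by (intro integral_cong_AE) (auto simp: AE_measure_pmf_iff dest: setR)
    also have "\<dots> = G N"
      unfolding G_def g_def by (simp add: Bochner_Integration.integral_diff Bochner_Integration.integral_add intR)
    finally show ?thesis .
  qed
  have "measure_pmf.expectation (Q n) F = enn2real (\<integral>\<^sup>+xs. ennreal (F xs) \<partial>Q n)"
    by (intro integral_eq_nn_integral) (auto simp: AE_measure_pmf_iff Fnn)
  also have "(\<integral>\<^sup>+xs. ennreal (F xs) \<partial>Q n) = (\<integral>\<^sup>+N. ennreal (G N) \<partial>poisson_pmf (real n))"
    unfolding Q_def poisson_sample_def by (simp add: inner)
  also have "enn2real \<dots> = measure_pmf.expectation (poisson_pmf (real n)) G"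
    by (intro integral_eq_nn_integral[symmetric]) (auto simp: Gnn)
  finally have eq: "measure_pmf.expectation (Q n) F = measure_pmf.expectation (poisson_pmf (real n)) G" .
  have "measure_pmf.expectation (Q n) F = measure_pmf.expectation (Q n) f - f [] + S * measure_pmf.expectation (Q n) (\<lambda>xs. real (length xs))"
    unfolding F_def using intQ_f[OF n] intQ_len[OF n]
    by (simp add: Bochner_Integration.integral_diff Bochner_Integration.integral_add)
  moreover have "measure_pmf.expectation (poisson_pmf (real n)) G = measure_pmf.expectation (poisson_pmf (real n)) g - f [] + S * measure_pmf.expectation (poisson_pmf (real n)) (\<lambda>N. real N)"
    unfolding G_def using intP_g[OF n] poisson_int_N[of "real n"] n
    by (simp add: Bochner_Integration.integral_diff Bochner_Integration.integral_add)
  ultimately show ?thesis using eq E_len[OF n] by simp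
qed

lemma tailA:
  assumes n: "n \<ge> 1" and l: "l > 0"
    and bdh: "\<And>u v a b. set u \<subseteq> set_pmf p \<Longrightarrow> set v \<subseteq> set_pmf p \<Longrightarrow> a \<in> set_pmf p \<Longrightarrow> b \<in> set_pmf p
             \<Longrightarrow> \<bar>h (u@a#v) - h (u@b#v)\<bar> \<le> S"
  shows "emeasure (measure_pmf (Q n)) {xs. t < h xs - measure_pmf.expectation (replicate_pmf (length xs) p) h}
         \<le> ennreal (exp (-l*t)) * ennreal (exp (real n * (exp (l\<^sup>2 * S\<^sup>2 / 8) - 1)))"
proof -
  have rn: "real n > 0" using n by simp
  have "(\<integral>\<^sup>+xs. ennreal (exp (l * (h xs - measure_pmf.expectation (replicate_pmf (length xs) p) h))) \<partial>Q n)
      = (\<integral>\<^sup>+N. (\<integral>\<^sup>+xs. ennreal (exp (l * (h xs - measure_pmf.expectation (replicate_pmf (length xs) p) h))) \<partial>replicate_pmf N p) \<partial>poisson_pmf (real n))"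
    unfolding Q_def poisson_sample_def by simp
  also have "\<dots> \<le> (\<integral>\<^sup>+N. ennreal (exp ((l\<^sup>2 * S\<^sup>2 / 8) * real N)) \<partial>poisson_pmf (real n))"
  proof (intro nn_integral_mono)
    fix N
    have "(\<integral>\<^sup>+xs. ennreal (exp (l * (h xs - measure_pmf.expectation (replicate_pmf (length xs) p) h))) \<partial>replicate_pmf N p)
        = (\<integral>\<^sup>+xs. ennreal (exp (l * (h xs - measure_pmf.expectation (replicate_pmf N p) h))) \<partial>replicate_pmf N p)"
      by (intro nn_integral_cong_AE) (auto simp: AE_measure_pmf_iff dest: setR)
    also have "\<dots> \<le> ennreal (exp (l\<^sup>2 * real N * S\<^sup>2 / 8))"
      by (rule mcdiarmid_mgf[where h=h, OF finp l bdh])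
    also have "\<dots> = ennreal (exp ((l\<^sup>2 * S\<^sup>2 / 8) * real N))" by (simp add: algebra_simps)
    finally show "(\<integral>\<^sup>+xs. ennreal (exp (l * (h xs - measure_pmf.expectation (replicate_pmf (length xs) p) h))) \<partial>replicate_pmf N p)
        \<le> ennreal (exp ((l\<^sup>2 * S\<^sup>2 / 8) * real N))" .
  qed
  also have "\<dots> = ennreal (exp (real n * (exp (l\<^sup>2 * S\<^sup>2 / 8) - 1)))"
    by (rule poisson_mgf[OF rn])
  finally have I: "(\<integral>\<^sup>+xs. ennreal (exp (l * (h xs - measure_pmf.expectation (replicate_pmf (length xs) p) h))) \<partial>Q n)
     \<le> ennreal (exp (real n * (exp (l\<^sup>2 * S\<^sup>2 / 8) - 1)))" .
  show ?thesis
    by (rule order_trans[OF chernoff_pmf[OF l]]) (intro mult_left_mono I, simp)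
qed

lemma tailB:
  assumes n: "n \<ge> 1" and mu: "\<mu> > 0"
  shows "emeasure (measure_pmf (Q n)) {xs. t < \<sigma> * (real (length xs) - real n)}
         \<le> ennreal (exp (-\<mu>*t)) * ennreal (exp (-(\<mu>*\<sigma>) * real n) * exp (real n * (exp (\<mu>*\<sigma>) - 1)))"
proof -
  have rn: "real n > 0" using n by simp
  have "(\<integral>\<^sup>+xs. ennreal (exp (\<mu> * (\<sigma> * (real (length xs) - real n)))) \<partial>Q n)
      = (\<integral>\<^sup>+N. ennreal (exp (\<mu> * (\<sigma> * (real N - real n)))) \<partial>poisson_pmf (real n))"
    by (rule nnQ)
  also have "\<dots> = (\<integral>\<^sup>+N. ennreal (exp (-(\<mu>*\<sigma>) * real n)) * ennreal (exp ((\<mu>*\<sigma>) * real N)) \<partial>poisson_pmf (real n))"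
    by (intro nn_integral_cong) (simp add: ennreal_mult'[symmetric] mult_exp_exp algebra_simps)
  also have "\<dots> = ennreal (exp (-(\<mu>*\<sigma>) * real n)) * (\<integral>\<^sup>+N. ennreal (exp ((\<mu>*\<sigma>) * real N)) \<partial>poisson_pmf (real n))"
    by (rule nn_integral_cmult) simp
  also have "\<dots> = ennreal (exp (-(\<mu>*\<sigma>) * real n) * exp (real n * (exp (\<mu>*\<sigma>) - 1)))"
    by (simp add: poisson_mgf[OF rn] ennreal_mult'[symmetric])
  finally have I: "(\<integral>\<^sup>+xs. ennreal (exp (\<mu> * (\<sigma> * (real (length xs) - real n)))) \<partial>Q n)
      = ennreal (exp (-(\<mu>*\<sigma>) * real n) * exp (real n * (exp (\<mu>*\<sigma>) - 1)))" .
  show ?thesis using chernoff_pmf[OF mu, of "Q n" t "\<lambda>xs. \<sigma> * (real (length xs) - real n)"] I by simp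
qed

end



context setting begin

lemma meas_le: "emeasure (measure_pmf M) A \<le> ennreal b \<Longrightarrow> 0 \<le> b \<Longrightarrow> measure_pmf.prob M A \<le> b"
  by (simp add: measure_pmf.emeasure_eq_measure)

theorem main:
  assumes n: "n \<ge> 1" and Sn: "1 / real n \<le> S" and e0: "0 < \<epsilon>" and e1: "\<epsilon> < 1"
  shows "measure_pmf.prob (Q n) {xs. \<bar>f xs - measure_pmf.expectation (Q n) f\<bar> > \<epsilon>}
         \<le> 4 * exp (- (\<epsilon>\<^sup>2 / (2 * real n * (4 * S)\<^sup>2)))"
proof -
  have rn: "real n > 0" "real n \<ge> 1" using n by auto
  have Spos: "S > 0" using Sn rn by (smt (verit) divide_pos_pos)
  have SN: "S * real n \<ge> 1" using Sn rn by (simp add: field_simps)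
  define w where "w = \<epsilon>\<^sup>2 / (S\<^sup>2 * real n)"
  have w0: "w \<ge> 0" unfolding w_def by simp
  have RHS: "\<epsilon>\<^sup>2 / (2 * real n * (4 * S)\<^sup>2) = w / 32"
    unfolding w_def by (simp add: power2_eq_square field_simps)
  have wn: "w \<le> real n"
  proof -
    have "\<epsilon>\<^sup>2 \<le> 1" using e0 e1 by (simp add: power_le_one)
    also have "1 \<le> (S * real n)\<^sup>2" using SN by (simp add: one_le_power)
    finally have "\<epsilon>\<^sup>2 \<le> S\<^sup>2 * real n * real n" by (simp add: power2_eq_square algebra_simps)
    then show ?thesis unfolding w_def using Spos rn by (simp add: field_simps)
  qed
  define E where "E = {xs. \<bar>f xs - measure_pmf.expectation (Q n) f\<bar> > \<epsilon>}"
  show ?thesis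
  proof (cases "w \<le> 40")
    case True
    have "exp (1/4::real) \<le> 1 + 1/4 + (1/4)\<^sup>2" by (rule exp_bound) auto
    then have h5: "exp (1/4::real) ^ 5 \<le> (21/16) ^ 5" by (intro power_mono) (auto simp: power2_eq_square)
    have h6: "((21/16)::real) ^ 5 \<le> 4" by (simp add: power_divide)
    have "exp (5/4::real) = exp (1/4) ^ 5" using exp_of_nat_mult[of 5 "1/4::real"] by simp
    then have "exp (5/4::real) \<le> 4" using h5 h6 by linarith
    moreover have "exp (w/32) \<le> exp (5/4)" using True by simp
    ultimately have "exp (w/32) \<le> 4" by linarith
    then have "1 \<le> 4 * exp (- (w/32))" by (simp add: exp_minus field_simps)
    then show ?thesis unfolding RHS using measure_pmf.prob_le_1[of "Q n"] by (meson order_trans)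
  next
    case False
    then have w40: "w > 40" by simp
    define m where "m = measure_pmf.expectation (Q n) f"
    have m: "m = measure_pmf.expectation (poisson_pmf (real n)) g" unfolding m_def by (rule tower[OF n])
    have dev: "\<bar>g n - m\<bar> \<le> 3/10 * \<epsilon>"
    proof -
      have "\<bar>m - g n\<bar> = \<bar>measure_pmf.expectation (poisson_pmf (real n)) (\<lambda>N. g N - g n)\<bar>"
        unfolding m using intP_g[OF n] by (simp add: Bochner_Integration.integral_diff)
      also have "\<dots> \<le> measure_pmf.expectation (poisson_pmf (real n)) (\<lambda>N. S * \<bar>real N - real n\<bar>)"
      proof (rule order_trans[OF integral_abs_bound], rule integral_mono)
        show "integrable (measure_pmf (poisson_pmf (real n))) (\<lambda>N. \<bar>g N - g n\<bar>)"
          using intP_g[OF n] by simp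
        show "integrable (measure_pmf (poisson_pmf (real n))) (\<lambda>N. S * \<bar>real N - real n\<bar>)"
          using poisson_int_N[OF rn(1)] by simp
      qed (rule g_lip)
      also have "\<dots> = S * measure_pmf.expectation (poisson_pmf (real n)) (\<lambda>N. \<bar>real N - real n\<bar>)"
        by simp
      also have "\<dots> \<le> S * (7/4 * sqrt (real n))"
        using E_absdev[OF n] Spos by (intro mult_left_mono) auto
      also have "\<dots> \<le> 3/10 * \<epsilon>"
      proof (rule power2_le_imp_le)
        have "(S * (7/4 * sqrt (real n)))\<^sup>2 = 49/16 * (S\<^sup>2 * real n)"
          using rn by (simp add: power_mult_distrib power_divide)
        also have "\<dots> \<le> 9/100 * \<epsilon>\<^sup>2"
        proof -
          have "\<epsilon>\<^sup>2 = w * (S\<^sup>2 * real n)" unfolding w_def using Spos rn by simp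
          then show ?thesis using w40 Spos rn by (simp add: mult_right_mono)
        qed
        also have "9/100 * \<epsilon>\<^sup>2 = (3/10 * \<epsilon>)\<^sup>2" by (simp add: power2_eq_square)
        finally show "(S * (7/4 * sqrt (real n)))\<^sup>2 \<le> (3/10 * \<epsilon>)\<^sup>2" .
      qed (use e0 in auto)
      finally show ?thesis by (simp add: abs_minus_commute)
    qed
    define gL where "gL xs = measure_pmf.expectation (replicate_pmf (length xs) p) f" for xs
    have gL: "gL xs = g (length xs)" for xs unfolding gL_def g_def ..
    define A1 where "A1 = {xs. \<epsilon>/5 < f xs - measure_pmf.expectation (replicate_pmf (length xs) p) f}"
    define A2 where "A2 = {xs. \<epsilon>/5 < (\<lambda>xs. - f xs) xs - measure_pmf.expectation (replicate_pmf (length xs) p) (\<lambda>xs. - f xs)}"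
    define B1 where "B1 = {xs::nat list. \<epsilon>/(2*S) < 1 * (real (length xs) - real n)}"
    define B2 where "B2 = {xs::nat list. \<epsilon>/(2*S) < (-1) * (real (length xs) - real n)}"
    have incl: "E \<subseteq> (A1 \<union> A2) \<union> (B1 \<union> B2)"
    proof
      fix xs assume "xs \<in> E"
      then have big: "\<epsilon> < \<bar>f xs - m\<bar>" unfolding E_def m_def by simp
      show "xs \<in> (A1 \<union> A2) \<union> (B1 \<union> B2)"
      proof (rule ccontr)
        assume "xs \<notin> (A1 \<union> A2) \<union> (B1 \<union> B2)"
        then have n1: "\<not> \<epsilon>/5 < f xs - g (length xs)" and n2: "\<not> \<epsilon>/5 < - f xs + g (length xs)"
          and n3: "\<not> \<epsilon>/(2*S) < real (length xs) - real n" and n4: "\<not> \<epsilon>/(2*S) < real n - real (length xs)"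
          unfolding A1_def A2_def B1_def B2_def by (auto simp: g_def)
        have a: "\<bar>f xs - g (length xs)\<bar> \<le> \<epsilon>/5" using n1 n2 by (auto simp only: abs_le_iff not_less)
        have b: "\<bar>real (length xs) - real n\<bar> \<le> \<epsilon>/(2*S)" using n3 n4 by (auto simp only: abs_le_iff not_less)
        have "\<bar>g (length xs) - g n\<bar> \<le> S * \<bar>real (length xs) - real n\<bar>" by (rule g_lip)
        also have "\<dots> \<le> S * (\<epsilon>/(2*S))" using b Spos by (intro mult_left_mono) auto
        also have "\<dots> = \<epsilon>/2" using Spos by simp
        finally have c: "\<bar>g (length xs) - g n\<bar> \<le> \<epsilon>/2" .
        have "\<bar>f xs - m\<bar> \<le> \<epsilon>" using a c dev by linarith
        then show False using big by simp
      qed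
    qed
    define l where "l = \<epsilon> / (S\<^sup>2 * real n)"
    have l: "l > 0" unfolding l_def using e0 Spos rn by simp
    have Aexp: "exp (-l*(\<epsilon>/5)) * exp (real n * (exp (l\<^sup>2 * S\<^sup>2 / 8) - 1)) \<le> exp (- (w/32))"
    proof -
      define x where "x = l\<^sup>2 * S\<^sup>2 / 8"
      have x: "x = w / (8 * real n)" unfolding x_def l_def w_def using Spos rn
        by (simp add: power2_eq_square field_simps)
      have x0: "0 \<le> x" "x \<le> 1/8" using x w0 wn rn by (auto simp: field_simps zero_le_mult_iff)
      have "exp x \<le> 1 + x + x\<^sup>2" by (rule exp_bound) (use x0 in auto)
      moreover have "x\<^sup>2 \<le> x * (1/8)" unfolding power2_eq_square using x0 by (intro mult_left_mono) auto
      ultimately have "exp x - 1 \<le> x * (9/8)" by simp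
      then have "real n * (exp x - 1) \<le> real n * (x * (9/8))" using rn by (intro mult_left_mono) auto
      also have "\<dots> = 9 * w / 64" using x rn by (simp add: field_simps)
      finally have 1: "real n * (exp x - 1) \<le> 9 * w / 64" .
      have 2: "l * (\<epsilon>/5) = w / 5" unfolding l_def w_def by (simp add: power2_eq_square field_simps)
      have "-l*(\<epsilon>/5) + real n * (exp x - 1) \<le> - (w/32)" using 1 2 w0 by linarith
      then show ?thesis unfolding x_def by (simp add: mult_exp_exp)
    qed
    have bdA: "emeasure (measure_pmf (Q n)) A1 \<le> ennreal (exp (- (w/32)))"
      "emeasure (measure_pmf (Q n)) A2 \<le> ennreal (exp (- (w/32)))"
    proof -
      have "ennreal (exp (-l*(\<epsilon>/5))) * ennreal (exp (real n * (exp (l\<^sup>2 * S\<^sup>2 / 8) - 1))) \<le> ennreal (exp (- (w/32)))"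
        using Aexp by (simp add: ennreal_mult'[symmetric] ennreal_leI)
      note * = order_trans[OF _ this]
      show "emeasure (measure_pmf (Q n)) A1 \<le> ennreal (exp (- (w/32)))"
        unfolding A1_def by (rule *, rule tailA[where h=f, OF n l subst_bd])
      show "emeasure (measure_pmf (Q n)) A2 \<le> ennreal (exp (- (w/32)))"
        unfolding A2_def by (rule *, rule tailA[where h="\<lambda>xs. - f xs", OF n l subst_bd_neg])
    qed
    define \<mu> where "\<mu> = \<epsilon> / (4 * S * real n)"
    have mu: "\<mu> > 0" "\<mu> \<le> 1" unfolding \<mu>_def using e0 e1 Spos rn SN
      by (auto simp: field_simps)
    have Bexp: "exp (-\<mu>*(\<epsilon>/(2*S))) * (exp (-(\<mu>*\<sigma>) * real n) * exp (real n * (exp (\<mu>*\<sigma>) - 1))) \<le> exp (- (w/32))"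
      if s: "\<bar>\<sigma>\<bar> = 1" for \<sigma>
    proof -
      have "exp (-(\<mu>*\<sigma>) * real n) * exp (real n * (exp (\<mu>*\<sigma>) - 1)) \<le> exp (real n * (\<mu>*\<sigma>)\<^sup>2)"
        using mu s by (intro mgf_centered_le n) (auto simp: abs_mult)
      also have "(\<mu>*\<sigma>)\<^sup>2 = \<mu>\<^sup>2"
      proof -
        have "\<sigma> = 1 \<or> \<sigma> = -1" using s by (auto simp: abs_if split: if_splits)
        then show ?thesis by auto
      qed
      finally have 1: "exp (-(\<mu>*\<sigma>) * real n) * exp (real n * (exp (\<mu>*\<sigma>) - 1)) \<le> exp (real n * \<mu>\<^sup>2)" .
      have 2: "real n * \<mu>\<^sup>2 = w / 16" unfolding \<mu>_def w_def using Spos rn by (simp add: power2_eq_square field_simps)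
      have 3: "-\<mu>*(\<epsilon>/(2*S)) = - (w / 8)" unfolding \<mu>_def w_def using Spos rn by (simp add: power2_eq_square field_simps)
      have "exp (-\<mu>*(\<epsilon>/(2*S))) * (exp (-(\<mu>*\<sigma>) * real n) * exp (real n * (exp (\<mu>*\<sigma>) - 1)))
          \<le> exp (-\<mu>*(\<epsilon>/(2*S))) * exp (real n * \<mu>\<^sup>2)"
        using 1 by (intro mult_left_mono) auto
      also have "\<dots> = exp (- (w/8) + w/16)" by (simp only: mult_exp_exp 2 3)
      also have "\<dots> \<le> exp (- (w/32))" using w0 by simp
      finally show ?thesis .
    qed
    have bdB: "emeasure (measure_pmf (Q n)) B1 \<le> ennreal (exp (- (w/32)))"
      "emeasure (measure_pmf (Q n)) B2 \<le> ennreal (exp (- (w/32)))"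
    proof -
      have **: "ennreal (exp (-\<mu>*(\<epsilon>/(2*S)))) * ennreal (exp (-(\<mu>*\<sigma>) * real n) * exp (real n * (exp (\<mu>*\<sigma>) - 1))) \<le> ennreal (exp (- (w/32)))"
        if "\<bar>\<sigma>\<bar> = 1" for \<sigma>
        using Bexp[OF that] by (simp add: ennreal_mult'[symmetric] ennreal_leI)
      show "emeasure (measure_pmf (Q n)) B1 \<le> ennreal (exp (- (w/32)))"
        unfolding B1_def by (rule order_trans[OF tailB[OF n mu(1)] **]) simp
      show "emeasure (measure_pmf (Q n)) B2 \<le> ennreal (exp (- (w/32)))"
        unfolding B2_def by (rule order_trans[OF tailB[OF n mu(1)] **]) simp
    qed
    have "measure_pmf.prob (Q n) E \<le> measure_pmf.prob (Q n) ((A1 \<union> A2) \<union> (B1 \<union> B2))"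
      by (rule measure_pmf.finite_measure_mono[OF incl]) simp
    also have "\<dots> \<le> measure_pmf.prob (Q n) (A1 \<union> A2) + measure_pmf.prob (Q n) (B1 \<union> B2)"
      by (rule measure_subadditive) (auto simp: measure_pmf.emeasure_eq_measure)
    also have "\<dots> \<le> (measure_pmf.prob (Q n) A1 + measure_pmf.prob (Q n) A2) + (measure_pmf.prob (Q n) B1 + measure_pmf.prob (Q n) B2)"
      by (intro add_mono measure_subadditive) (auto simp: measure_pmf.emeasure_eq_measure)
    also have "\<dots> \<le> (exp (- (w/32)) + exp (- (w/32))) + (exp (- (w/32)) + exp (- (w/32)))"
      by (intro add_mono meas_le bdA bdB) auto
    finally show ?thesis unfolding RHS E_def by simp
  qed
qed

end

theorem mainTheorem7:
  fixes k n :: nat and p :: "nat pmf" and f :: "nat list \<Rightarrow> real" and \<epsilon> :: real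
  assumes "k \<ge> 1" and "n \<ge> 1"
    and "set_pmf p \<subseteq> {1..k}"
    and "bdd_above (sens_set k f)"
    and "1 / real n \<le> sensitivity k f"
    and "0 < \<epsilon>" and "\<epsilon> < 1"
  shows "measure_pmf.prob (poisson_sample n p)
           {xs. \<bar>f xs - measure_pmf.expectation (poisson_sample n p) f\<bar> > \<epsilon>}
         \<le> 4 * exp (- (\<epsilon>\<^sup>2 / (2 * real n * (4 * sensitivity k f)\<^sup>2)))"
proof -
  interpret setting k p f by unfold_locales (use assms in auto)
  show ?thesis by (rule main[of n \<epsilon>, unfolded Q_def]) (use assms in auto)
qed

end
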